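(* Let $\mathcal S=(E,\mathcal I)$ be an $r$-covering system. If $\texttt{a}$ and $\texttt{a}'$ are two activities of $\mathcal S$, then they have the same activity vector (equivalently, the same activity polynomial).
   Context: For finite sets $X\subseteq Y$, write $[X,Y]=\{Z: X\subseteq Z\subseteq Y\}$. An $r$-covering system is a pair $\mathcal S=(E,\mathcal I)$ where $E$ is a finite set and $\mathcal I$ is a collection of subsets of $E$, each of cardinality at most $r$, such that for every $I\in\mathcal I$ there exists $B\in\mathcal I$ with $|B|=r$ and $[I,B]\subseteq\mathcal I$. Members of $\mathcal I$ of cardinality $r$ are called bases, and $\mathcal B$ denotes the set of bases. An activity of $\mathcal S$ is a function $\texttt{a}:\mathcal B\to 2^E$ such that for every $B\in\mathcal B$, $\texttt{a}(B)\subseteq B$ and $[B\setminus\texttt{a}(B),B]\subseteq\mathcal I$, and such that every $I\in\mathcal I$ belongs to $[B\setminus\texttt{a}(B),B]$ for exactly one $B\in\mathcal B$. The activity vector is $(a_0,\dots,a_r)$ where $a_i$ is the number of bases $B$ with $|\texttt{a}(B)|=i$. *)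

theory Defs
  imports Main
begin

definition interval :: "'a set \<Rightarrow> 'a set \<Rightarrow> 'a set set" where
  "interval X Y = {Z. X \<subseteq> Z \<and> Z \<subseteq> Y}"

definition covering_system :: "nat \<Rightarrow> 'a set \<Rightarrow> 'a set set \<Rightarrow> bool" where
  "covering_system r E \<I> \<longleftrightarrow> finite E \<and>
     (\<forall>I\<in>\<I>. I \<subseteq> E \<and> card I \<le> r) \<and>
     (\<forall>I\<in>\<I>. \<exists>B\<in>\<I>. card B = r \<and> interval I B \<subseteq> \<I>)"

definition bases :: "nat \<Rightarrow> 'a set set \<Rightarrow> 'a set set" where
  "bases r \<I> = {B \<in> \<I>. card B = r}"

definition activity :: "nat \<Rightarrow> 'a set \<Rightarrow> 'a set set \<Rightarrow> ('a set \<Rightarrow> 'a set) \<Rightarrow> bool" where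
  "activity r E \<I> a \<longleftrightarrow>
     (\<forall>B\<in>bases r \<I>. a B \<subseteq> B \<and> interval (B - a B) B \<subseteq> \<I>) \<and>
     (\<forall>I\<in>\<I>. \<exists>!B. B \<in> bases r \<I> \<and> I \<in> interval (B - a B) B)"

definition activity_vector :: "nat \<Rightarrow> 'a set set \<Rightarrow> ('a set \<Rightarrow> 'a set) \<Rightarrow> nat list" where
  "activity_vector r \<I> a = map (\<lambda>i. card {B \<in> bases r \<I>. card (a B) = i}) [0..<Suc r]"

end

theory Submission
  imports Defs
begin

lemma binom_inv:
  fixes n m :: "nat \<Rightarrow> nat"
  assumes h: "\<forall>j\<le>r. (\<Sum>i\<le>r. n i * (i choose j)) = (\<Sum>i\<le>r. m i * (i choose j))"
  shows "i \<le> r \<Longrightarrow> n i = m i"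
proof (induction "r - i" arbitrary: i rule: less_induct)
  case less
  have eq: "(\<Sum>k\<in>{..r}-{i}. n k * (k choose i)) = (\<Sum>k\<in>{..r}-{i}. m k * (k choose i))"
  proof (rule sum.cong)
    fix k assume k: "k \<in> {..r}-{i}"
    show "n k * (k choose i) = m k * (k choose i)"
    proof (cases "k < i")
      case True then show ?thesis by simp
    next
      case False
      with k have "i < k" "k \<le> r" by auto
      then have "n k = m k" using less(1)[of k] less(2) by auto
      then show ?thesis by simp
    qed
  qed simp
  have "(\<Sum>k\<le>r. n k * (k choose i)) = n i * (i choose i) + (\<Sum>k\<in>{..r}-{i}. n k * (k choose i))"
    using less(2) by (subst sum.remove[of _ i]) auto
  moreover have "(\<Sum>k\<le>r. m k * (k choose i)) = m i * (i choose i) + (\<Sum>k\<in>{..r}-{i}. m k * (k choose i))"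
    using less(2) by (subst sum.remove[of _ i]) auto
  ultimately show ?case using h less(2) eq by auto
qed

lemma interval_count:
  assumes fB: "finite B" and cB: "card B = r" and AB: "A \<subseteq> B" and j: "j \<le> r"
  shows "card {I \<in> interval (B - A) B. card I = r - j} = card A choose j"
proof -
  let ?T = "{S. S \<subseteq> A \<and> card S = j}"
  have fA: "finite A" using fB AB finite_subset by blast
  have img: "{I \<in> interval (B - A) B. card I = r - j} = (\<lambda>S. B - S) ` ?T"
  proof (rule set_eqI, rule iffI)
    fix I assume I: "I \<in> {I \<in> interval (B - A) B. card I = r - j}"
    then have IB: "I \<subseteq> B" "B - A \<subseteq> I" "card I = r - j" by (auto simp: interval_def)
    have "card (B - I) = j" using IB fB cB j by (simp add: card_Diff_subset finite_subset)
    moreover have "B - I \<subseteq> A" using IB by auto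
    moreover have "I = B - (B - I)" using IB by auto
    ultimately show "I \<in> (\<lambda>S. B - S) ` ?T" by blast
  next
    fix I assume "I \<in> (\<lambda>S. B - S) ` ?T"
    then obtain S where S: "S \<subseteq> A" "card S = j" "I = B - S" by auto
    have "card (B - S) = r - j" using S AB fB cB by (simp add: card_Diff_subset finite_subset)
    then show "I \<in> {I \<in> interval (B - A) B. card I = r - j}" using S by (auto simp: interval_def)
  qed
  have "inj_on (\<lambda>S. B - S) ?T"
    by (rule inj_onI) (use AB in blast)
  then have "card {I \<in> interval (B - A) B. card I = r - j} = card ?T"
    by (simp add: img card_image)
  also have "\<dots> = card A choose j" using n_subsets[OF fA] by simp
  finally show ?thesis .
qed

lemma count:
  assumes cs: "covering_system r E \<I>" and act: "activity r E \<I> a" and j: "j \<le> r"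
  shows "card {I \<in> \<I>. card I = r - j} = (\<Sum>i\<le>r. card {B \<in> bases r \<I>. card (a B) = i} * (i choose j))"
proof -
  have fE: "finite E" and sub: "\<forall>I\<in>\<I>. I \<subseteq> E \<and> card I \<le> r" using cs by (auto simp: covering_system_def)
  have a1: "\<forall>B\<in>bases r \<I>. a B \<subseteq> B \<and> interval (B - a B) B \<subseteq> \<I>"
    and a2: "\<forall>I\<in>\<I>. \<exists>!B. B \<in> bases r \<I> \<and> I \<in> interval (B - a B) B"
    using act by (auto simp: activity_def)
  have "\<I> \<subseteq> Pow E" using sub by auto
  then have fI: "finite \<I>" using fE by (simp add: finite_subset)
  have fb: "finite (bases r \<I>)" using fI by (simp add: bases_def)
  have bI: "\<And>B. B \<in> bases r \<I> \<Longrightarrow> B \<in> \<I> \<and> card B = r" by (simp add: bases_def)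
  have fBs: "\<And>B. B \<in> bases r \<I> \<Longrightarrow> finite B" proof -
    fix B assume "B \<in> bases r \<I>"
    then have "B \<subseteq> E" using bI sub by blast
    then show "finite B" using fE by (rule finite_subset)
  qed
  have U: "{I \<in> \<I>. card I = r - j} = (\<Union>B\<in>bases r \<I>. {I \<in> interval (B - a B) B. card I = r - j})"
  proof (rule set_eqI, rule iffI)
    fix I assume "I \<in> {I \<in> \<I>. card I = r - j}"
    then show "I \<in> (\<Union>B\<in>bases r \<I>. {I \<in> interval (B - a B) B. card I = r - j})"
      using a2 by blast
  next
    fix I assume "I \<in> (\<Union>B\<in>bases r \<I>. {I \<in> interval (B - a B) B. card I = r - j})"
    then show "I \<in> {I \<in> \<I>. card I = r - j}" using a1 by blast
  qed
  have "card {I \<in> \<I>. card I = r - j} = (\<Sum>B\<in>bases r \<I>. card {I \<in> interval (B - a B) B. card I = r - j})"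
    unfolding U
  proof (rule card_UN_disjoint[OF fb])
    show "\<forall>B\<in>bases r \<I>. finite {I \<in> interval (B - a B) B. card I = r - j}"
    proof
      fix B assume "B \<in> bases r \<I>"
      then have "{I \<in> interval (B - a B) B. card I = r - j} \<subseteq> \<I>" using a1 by auto
      then show "finite {I \<in> interval (B - a B) B. card I = r - j}" using fI by (rule finite_subset)
    qed
    show "\<forall>B\<in>bases r \<I>. \<forall>B'\<in>bases r \<I>. B \<noteq> B' \<longrightarrow>
      {I \<in> interval (B - a B) B. card I = r - j} \<inter> {I \<in> interval (B' - a B') B'. card I = r - j} = {}"
    proof (intro ballI impI)
      fix B B' assume B: "B \<in> bases r \<I>" "B' \<in> bases r \<I>" "B \<noteq> B'"
      show "{I \<in> interval (B - a B) B. card I = r - j} \<inter> {I \<in> interval (B' - a B') B'. card I = r - j} = {}"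
      proof (rule ccontr)
        assume "\<not> ?thesis"
        then obtain I where I: "I \<in> interval (B - a B) B" "I \<in> interval (B' - a B') B'" by blast
        then have "I \<in> \<I>" using a1 B by blast
        then show False using a2 I B by blast
      qed
    qed
  qed
  also have "\<dots> = (\<Sum>B\<in>bases r \<I>. card (a B) choose j)"
  proof (rule sum.cong[OF refl])
    fix B assume B: "B \<in> bases r \<I>"
    show "card {I \<in> interval (B - a B) B. card I = r - j} = card (a B) choose j"
      using interval_count[OF fBs[OF B] conjunct2[OF bI[OF B]] _ j] a1 B by blast
  qed
  also have "\<dots> = (\<Sum>i\<le>r. \<Sum>B\<in>{B \<in> bases r \<I>. card (a B) = i}. card (a B) choose j)"
  proof (rule sum.group[symmetric, OF fb])
    show "finite {..r}" by simp
    show "(\<lambda>B. card (a B)) ` bases r \<I> \<subseteq> {..r}"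
    proof
      fix x assume "x \<in> (\<lambda>B. card (a B)) ` bases r \<I>"
      then obtain B where B: "B \<in> bases r \<I>" "x = card (a B)" by auto
      have "card (a B) \<le> card B" using card_mono[OF fBs[OF B(1)]] a1 B(1) by auto
      then show "x \<in> {..r}" using B bI by auto
    qed
  qed
  also have "\<dots> = (\<Sum>i\<le>r. card {B \<in> bases r \<I>. card (a B) = i} * (i choose j))"
    by (intro sum.cong) auto
  finally show ?thesis .
qed

theorem mainTheorem4:
  fixes E :: "'a set" and \<I> :: "'a set set" and r :: nat
    and a a' :: "'a set \<Rightarrow> 'a set"
  assumes "covering_system r E \<I>"
    and "activity r E \<I> a"
    and "activity r E \<I> a'"
  shows "activity_vector r \<I> a = activity_vector r \<I> a'"
proof -
  have "\<forall>j\<le>r. (\<Sum>i\<le>r. card {B \<in> bases r \<I>. card (a B) = i} * (i choose j))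
      = (\<Sum>i\<le>r. card {B \<in> bases r \<I>. card (a' B) = i} * (i choose j))"
  proof (intro allI impI)
    fix j assume j: "j \<le> r"
    show "(\<Sum>i\<le>r. card {B \<in> bases r \<I>. card (a B) = i} * (i choose j))
      = (\<Sum>i\<le>r. card {B \<in> bases r \<I>. card (a' B) = i} * (i choose j))"
      using count[OF assms(1) assms(2) j] count[OF assms(1) assms(3) j] by simp
  qed
  then have "\<And>i. i \<le> r \<Longrightarrow> card {B \<in> bases r \<I>. card (a B) = i} = card {B \<in> bases r \<I>. card (a' B) = i}"
    by (rule binom_inv)
  then show ?thesis unfolding activity_vector_def by (intro map_cong) auto
qed

end
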